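(* Every generic quadrangle $P$ in $\mathbb{R}^3$ is regular. Moreover, for every support system $u_1,u_2,u_3,u_4$ of $P$, the derived quadrangle $P'=B_1B_2B_3B_4$ is a plane quadrangle (its four vertices are coplanar) with oriented area $0$; in particular it is self-intersecting.
   Context: For a closed polygon $P=A_1\ldots A_n$ in $\mathbb{R}^3$ put $v_1=\overline{A_1A_2},\ldots,v_n=\overline{A_nA_1}$, indices cyclic mod $n$. $P$ is generic if any two consecutive $v_i,v_{i+1}$ are not collinear and any three consecutive $v_i,v_{i+1},v_{i+2}$ are not coplanar. A support system of $P$ is a tuple $u_1,\ldots,u_n$ with $[u_i,u_{i+1}]=v_{i+1}$ for all $i$ (cyclically; $[\cdot,\cdot]$ is the cross product). A generic polygon is regular if it has a support system. Given a support system, fix an origin $O$ and let $B_i$ be the point with $\overline{OB_i}=u_i$; the polygon $P'=B_1\ldots B_n$ (edge vectors $u_2-u_1,\ldots,u_1-u_n$) is called the derived polygon (a derivative) of $P$. A closed polygon $B_1\ldots B_n$ has oriented area $0$ if $\sum_{i=1}^n[\overline{OB_i},\overline{OB_{i+1}}]=0$ (a quantity independent of $O$); for a plane polygon this means its signed area in its plane is zero. *)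

theory Defs
  imports "HOL-Analysis.Analysis"
begin

text \<open>A closed polygon with n vertices A 0, ..., A (n-1) (0-indexed, paper's A_1..A_n),
  indices cyclic mod n.  Edge vector v_i = A_{i+1} - A_i.\<close>

definition edge :: "nat \<Rightarrow> (nat \<Rightarrow> real^3) \<Rightarrow> nat \<Rightarrow> real^3" where
  "edge n A i = A (Suc i mod n) - A (i mod n)"

definition generic_polygon :: "nat \<Rightarrow> (nat \<Rightarrow> real^3) \<Rightarrow> bool" where
  "generic_polygon n A \<longleftrightarrow>
     (\<forall>i<n. \<not> collinear {0, edge n A i, edge n A (Suc i mod n)} \<and>
            \<not> coplanar {0, edge n A i, edge n A (Suc i mod n), edge n A (Suc (Suc i) mod n)})"

definition support_system :: "nat \<Rightarrow> (nat \<Rightarrow> real^3) \<Rightarrow> (nat \<Rightarrow> real^3) \<Rightarrow> bool" where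
  "support_system n A u \<longleftrightarrow>
     (\<forall>i<n. cross3 (u i) (u (Suc i mod n)) = edge n A (Suc i mod n))"

definition regular_polygon :: "nat \<Rightarrow> (nat \<Rightarrow> real^3) \<Rightarrow> bool" where
  "regular_polygon n A \<longleftrightarrow> generic_polygon n A \<and> (\<exists>u. support_system n A u)"

definition oriented_area_zero :: "nat \<Rightarrow> (nat \<Rightarrow> real^3) \<Rightarrow> bool" where
  "oriented_area_zero n B \<longleftrightarrow>
     (\<forall>Z. (\<Sum>i<n. cross3 (B i - Z) (B (Suc i mod n) - Z)) = 0)"

definition self_intersecting_quad :: "(nat \<Rightarrow> real^3) \<Rightarrow> bool" where
  "self_intersecting_quad B \<longleftrightarrow>
     closed_segment (B 0) (B 1) \<inter> closed_segment (B 2) (B 3) \<noteq> {} \<or>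
     closed_segment (B 1) (B 2) \<inter> closed_segment (B 3) (B 0) \<noteq> {}"

end

theory Submission
  imports Defs
begin

lemma L1: "cross3 (cross3 a b) (cross3 b c) = (a \<bullet> cross3 b c) *\<^sub>R b" for a b c :: "real^3"
  by (simp add: cross3_simps forall_3)

lemma L2: "cross3 u (cross3 a b) = (u \<bullet> b) *\<^sub>R a - (u \<bullet> a) *\<^sub>R b" for a b u :: "real^3"
  by (simp add: cross3_simps forall_3)

lemma L4id: "cross3 w (cross3 u w) = (w \<bullet> w) *\<^sub>R u - (w \<bullet> u) *\<^sub>R w" for w u :: "real^3"
  by (simp add: cross3_simps forall_3)

lemma lag: "((cross3 a b) \<bullet> (cross3 a b)) *\<^sub>R c = ((c \<bullet> a) * (b \<bullet> b) - (c \<bullet> b) * (a \<bullet> b)) *\<^sub>R a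
   + ((c \<bullet> b) * (a \<bullet> a) - (c \<bullet> a) * (a \<bullet> b)) *\<^sub>R b + (c \<bullet> (cross3 a b)) *\<^sub>R (cross3 a b)" for a b c :: "real^3"
  by (simp add: cross3_simps forall_3)

lemma all4: "(\<forall>i<4::nat. P i) \<longleftrightarrow> P 0 \<and> P 1 \<and> P 2 \<and> P 3"
  by (auto simp: numeral_eq_Suc less_Suc_eq)

lemma sum4: "(\<Sum>i<4::nat. f i) = f 0 + f 1 + f 2 + f 3"
  by (simp add: numeral_eq_Suc add.assoc)

lemma scal1: "c *\<^sub>R v = v \<Longrightarrow> v \<noteq> 0 \<Longrightarrow> c = 1" for v :: "real^3"
  by (metis scaleR_cancel_right scaleR_one)

lemma para:
  fixes u w :: "real^3"
  assumes "w \<noteq> 0" "u \<bullet> a = 0" "u \<bullet> b = 0" "cross3 a b = w"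
  shows "\<exists>c. u = c *\<^sub>R w"
proof -
  have "cross3 u w = 0" using L2[of u a b] assms by simp
  hence "cross3 w (cross3 u w) = 0" by simp
  hence "(w \<bullet> w) *\<^sub>R u = (w \<bullet> u) *\<^sub>R w" using L4id[of w u] by simp
  moreover have "w \<bullet> w \<noteq> 0" using assms(1) by simp
  ultimately have "u = ((w \<bullet> u) / (w \<bullet> w)) *\<^sub>R w"
    by (metis (no_types, lifting) divide_inverse_commute inverse_eq_divide scaleR_scaleR
        right_inverse scaleR_one mult.commute)
  thus ?thesis by blast
qed

lemma copl:
  fixes a b c :: "real^3"
  assumes "cross3 a b \<noteq> 0" "c \<bullet> cross3 a b = 0"
  shows "coplanar {0, a, b, c}"
proof -
  define G where "G = cross3 a b \<bullet> cross3 a b"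
  have G: "G \<noteq> 0" using assms(1) by (simp add: G_def)
  define \<alpha> where "\<alpha> = ((c \<bullet> a) * (b \<bullet> b) - (c \<bullet> b) * (a \<bullet> b)) / G"
  define \<beta> where "\<beta> = ((c \<bullet> b) * (a \<bullet> a) - (c \<bullet> a) * (a \<bullet> b)) / G"
  have "G *\<^sub>R c = (G * \<alpha>) *\<^sub>R a + (G * \<beta>) *\<^sub>R b"
    using lag[of a b c] assms(2) G by (simp add: G_def \<alpha>_def \<beta>_def)
  hence "G *\<^sub>R c = G *\<^sub>R (\<alpha> *\<^sub>R a + \<beta> *\<^sub>R b)" by (simp add: scaleR_add_right)
  hence c: "c = \<alpha> *\<^sub>R a + \<beta> *\<^sub>R b" using G by simp
  have "{0, a, b, c} \<subseteq> affine hull {0, a, b}"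
  proof -
    have "c \<in> affine hull {0,a,b}"
      unfolding affine_hull_3 c
      by (rule CollectI, rule exI[of _ "1 - \<alpha> - \<beta>"], rule exI[of _ \<alpha>], rule exI[of _ \<beta>]) simp
    thus ?thesis by (simp add: hull_inc)
  qed
  thus ?thesis unfolding coplanar_def by blast
qed

lemma quad:
  fixes p :: "nat \<Rightarrow> real^3"
  assumes "p 1 - p 3 = k *\<^sub>R (p 0 - p 2)"
  shows "coplanar {p 0, p 1, p 2, p 3} \<and> self_intersecting_quad p"
proof
  have p3: "p 3 = p 1 - k *\<^sub>R p 0 + k *\<^sub>R p 2" using assms by (simp add: algebra_simps)
  have "p 3 \<in> affine hull {p 0, p 1, p 2}"
    unfolding affine_hull_3
    by (rule CollectI, rule exI[of _ "- k"], rule exI[of _ 1], rule exI[of _ k]) (simp add: p3)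
  hence "{p 0, p 1, p 2, p 3} \<subseteq> affine hull {p 0, p 1, p 2}" by (simp add: hull_inc)
  thus "coplanar {p 0, p 1, p 2, p 3}" unfolding coplanar_def by blast
next
  have e: "p 1 + k *\<^sub>R p 2 = p 3 + k *\<^sub>R p 0" using assms by (simp add: algebra_simps)
  show "self_intersecting_quad p"
  proof (cases "k \<ge> 0")
    case True
    define X where "X = (1 / (1 + k)) *\<^sub>R p 1 + (k / (1 + k)) *\<^sub>R p 2"
    have pos: "1 + k > 0" using True by simp
    have X2: "X = (1 / (1 + k)) *\<^sub>R p 3 + (k / (1 + k)) *\<^sub>R p 0"
    proof -
      have "X = (1 / (1 + k)) *\<^sub>R (p 1 + k *\<^sub>R p 2)" by (simp add: X_def scaleR_add_right)
      also have "\<dots> = (1 / (1 + k)) *\<^sub>R (p 3 + k *\<^sub>R p 0)" by (simp only: e)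
      finally show ?thesis by (simp add: scaleR_add_right)
    qed
    have h: "1 - k / (1 + k) = 1 / (1 + k)" using pos by (simp add: field_simps)
    have "X \<in> closed_segment (p 1) (p 2)"
      unfolding closed_segment_def using True pos
      by (intro CollectI exI[of _ "k / (1 + k)"]) (simp add: h X_def)
    moreover have "X \<in> closed_segment (p 3) (p 0)"
      unfolding closed_segment_def using True pos
      by (intro CollectI exI[of _ "k / (1 + k)"]) (simp add: h X2)
    ultimately show ?thesis unfolding self_intersecting_quad_def by blast
  next
    case False
    define m where "m = - k"
    have pos: "1 + m > 0" "m > 0" using False by (auto simp: m_def)
    have e2: "p 1 + m *\<^sub>R p 0 = p 3 + m *\<^sub>R p 2" using assms by (simp add: algebra_simps m_def)
    define X where "X = (m / (1 + m)) *\<^sub>R p 0 + (1 / (1 + m)) *\<^sub>R p 1"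
    have X1: "X = (1 / (1 + m)) *\<^sub>R (p 1 + m *\<^sub>R p 0)" by (simp add: X_def scaleR_add_right)
    have X2: "X = (m / (1 + m)) *\<^sub>R p 2 + (1 / (1 + m)) *\<^sub>R p 3"
      unfolding X1 e2 by (simp add: scaleR_add_right)
    have h: "1 - 1 / (1 + m) = m / (1 + m)" using pos by (simp add: field_simps)
    have "X \<in> closed_segment (p 0) (p 1)"
      unfolding closed_segment_def using pos
      by (intro CollectI exI[of _ "1 / (1 + m)"]) (simp add: h X_def)
    moreover have "X \<in> closed_segment (p 2) (p 3)"
      unfolding closed_segment_def using pos
      by (intro CollectI exI[of _ "1 / (1 + m)"]) (simp add: h X2)
    ultimately show ?thesis unfolding self_intersecting_quad_def by blast
  qed
qed

lemma tp1: "a + b + c + d = 0 \<Longrightarrow> b \<bullet> cross3 c d = - (a \<bullet> cross3 b c)" for a b c d :: "real^3"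
proof -
  assume "a + b + c + d = 0" hence "d = -(a+b+c)" by (simp add: eq_neg_iff_add_eq_0 algebra_simps)
  note d = this show ?thesis unfolding d by (simp add: cross3_simps forall_3)
qed
lemma tp2: "a + b + c + d = 0 \<Longrightarrow> c \<bullet> cross3 d a = a \<bullet> cross3 b c" for a b c d :: "real^3"
proof -
  assume "a + b + c + d = 0" hence "d = -(a+b+c)" by (simp add: eq_neg_iff_add_eq_0 algebra_simps)
  note d = this show ?thesis unfolding d by (simp add: cross3_simps forall_3)
qed
lemma tp3: "a + b + c + d = 0 \<Longrightarrow> d \<bullet> cross3 a b = - (a \<bullet> cross3 b c)" for a b c d :: "real^3"
proof -
  assume "a + b + c + d = 0" hence "d = -(a+b+c)" by (simp add: eq_neg_iff_add_eq_0 algebra_simps)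
  note d = this show ?thesis unfolding d by (simp add: cross3_simps forall_3)
qed
lemma wsum: "a + b + c + d = 0 \<Longrightarrow> cross3 a b + cross3 c d = cross3 b c + cross3 d a" for a b c d :: "real^3"
proof -
  assume "a + b + c + d = 0" hence "d = -(a+b+c)" by (simp add: eq_neg_iff_add_eq_0 algebra_simps)
  note d = this show ?thesis unfolding d by (simp add: cross3_simps forall_3)
qed
lemma crossc: "cross3 (a + c) (b + c) = cross3 a b + cross3 a c - cross3 b c" for a b c :: "real^3"
  by (simp add: cross3_simps forall_3)

lemma mods: "Suc 0 mod 4 = (1::nat)" "Suc 1 mod 4 = (2::nat)" "Suc 2 mod 4 = (3::nat)" "Suc 3 mod 4 = (0::nat)"
  "Suc (Suc 0) mod 4 = (2::nat)" "Suc (Suc 1) mod 4 = (3::nat)" "Suc (Suc 2) mod 4 = (0::nat)" "Suc (Suc 3) mod 4 = (1::nat)"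
  by (simp_all add: numeral_2_eq_2)

lemma edges: "edge 4 A 0 = A 1 - A 0" "edge 4 A 1 = A 2 - A 1" "edge 4 A 2 = A 3 - A 2" "edge 4 A 3 = A 0 - A 3"
  by (simp add: edge_def, simp add: edge_def numeral_2_eq_2, simp add: edge_def, simp add: edge_def)

theorem theorem3p1:
  fixes A :: "nat \<Rightarrow> real^3"
  assumes "generic_polygon 4 A"
  shows "regular_polygon 4 A \<and>
    (\<forall>u Z. support_system 4 A u \<longrightarrow>
       (let B = (\<lambda>i. Z + u i) in
          coplanar {B 0, B 1, B 2, B 3} \<and> oriented_area_zero 4 B \<and> self_intersecting_quad B))"
proof -
  define v0 where "v0 = edge 4 A 0"
  define v1 where "v1 = edge 4 A 1"
  define v2 where "v2 = edge 4 A 2"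
  define v3 where "v3 = edge 4 A 3"
  have sum0: "v0 + v1 + v2 + v3 = 0" unfolding v0_def v1_def v2_def v3_def edges by simp
  have gen: "\<not> collinear {0, v0, v1}" "\<not> collinear {0, v1, v2}" "\<not> collinear {0, v2, v3}"
    "\<not> collinear {0, v3, v0}" "\<not> coplanar {0, v0, v1, v2}"
    using assms unfolding generic_polygon_def all4 mods by (simp_all add: v0_def v1_def v2_def v3_def)
  have nz: "v0 \<noteq> 0" "v1 \<noteq> 0" "v2 \<noteq> 0" "v3 \<noteq> 0"
    using gen(1-4) by (auto simp: collinear_2 insert_commute)
  define w0 where "w0 = cross3 v0 v1"
  define w1 where "w1 = cross3 v1 v2"
  define w2 where "w2 = cross3 v2 v3"
  define w3 where "w3 = cross3 v3 v0"
  have wnz: "w0 \<noteq> 0" "w1 \<noteq> 0" "w2 \<noteq> 0" "w3 \<noteq> 0"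
    using gen(1-4) by (simp_all add: w0_def w1_def w2_def w3_def cross_eq_0)
  define D where "D = v0 \<bullet> cross3 v1 v2"
  have D: "D \<noteq> 0"
  proof
    assume "D = 0"
    hence "v2 \<bullet> cross3 v0 v1 = 0" unfolding D_def by (simp add: cross3_simps forall_3 algebra_simps)
    thus False using copl[of v0 v1 v2] wnz(1) gen(5) by (simp add: w0_def)
  qed
  have t1: "v1 \<bullet> cross3 v2 v3 = - D" using tp1[OF sum0] by (simp add: D_def)
  have t2: "v2 \<bullet> cross3 v3 v0 = D" using tp2[OF sum0] by (simp add: D_def)
  have t3: "v3 \<bullet> cross3 v0 v1 = - D" using tp3[OF sum0] by (simp add: D_def)
  have ss: "support_system 4 A u \<longleftrightarrow> cross3 (u 0) (u 1) = v1 \<and> cross3 (u 1) (u 2) = v2 \<and>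
     cross3 (u 2) (u 3) = v3 \<and> cross3 (u 3) (u 0) = v0" for u
    unfolding support_system_def all4 mods by (simp add: v0_def v1_def v2_def v3_def)
  have reg: "regular_polygon 4 A"
  proof -
    define u where "u = (\<lambda>i::nat. if i = 0 then w0 else if i = 1 then (1/D) *\<^sub>R w1
       else if i = 2 then - w2 else - ((1/D) *\<^sub>R w3))"
    have "support_system 4 A u"
      unfolding ss using D
      by (simp add: u_def w0_def w1_def w2_def w3_def cross_mult_left cross_mult_right L1 t1 t2 t3
          flip: D_def)
    thus ?thesis using assms unfolding regular_polygon_def by blast
  qed
  have rest: "coplanar {Z + u 0, Z + u 1, Z + u 2, Z + u 3} \<and> oriented_area_zero 4 (\<lambda>i. Z + u i)
      \<and> self_intersecting_quad (\<lambda>i. Z + u i)" if su: "support_system 4 A u" for u Z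
  proof -
    have e: "cross3 (u 0) (u 1) = v1" "cross3 (u 1) (u 2) = v2"
      "cross3 (u 2) (u 3) = v3" "cross3 (u 3) (u 0) = v0" using su ss by auto
    have oa: "oriented_area_zero 4 (\<lambda>i. Z + u i)"
      unfolding oriented_area_zero_def
    proof
      fix Z'
      have "(\<Sum>i<4. cross3 (Z + u i - Z') (Z + u (Suc i mod 4) - Z'))
        = (\<Sum>i<4. cross3 (u i + (Z - Z')) (u (Suc i mod 4) + (Z - Z')))"
        by (simp add: algebra_simps)
      also have "\<dots> = v0 + v1 + v2 + v3"
        unfolding sum4 mods crossc e by (simp add: algebra_simps)
      finally show "(\<Sum>i<4. cross3 (Z + u i - Z') (Z + u (Suc i mod 4) - Z')) = 0"
        using sum0 by simp
    qed
    obtain t where t: "u 0 = t *\<^sub>R w0"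
      using para[OF wnz(1), of "u 0" v0 v1] e dot_cross_self by (metis w0_def)
    obtain s where s: "u 1 = s *\<^sub>R w1"
      using para[OF wnz(2), of "u 1" v1 v2] e dot_cross_self by (metis w1_def)
    obtain a where a: "u 2 = a *\<^sub>R w2"
      using para[OF wnz(3), of "u 2" v2 v3] e dot_cross_self by (metis w2_def)
    obtain b where b: "u 3 = b *\<^sub>R w3"
      using para[OF wnz(4), of "u 3" v3 v0] e dot_cross_self by (metis w3_def)
    have "cross3 (t *\<^sub>R w0) (s *\<^sub>R w1) = v1" using e(1) unfolding t s .
    hence "(t * s * D) *\<^sub>R v1 = v1"
      by (simp add: w0_def w1_def cross_mult_left cross_mult_right L1 mult_ac flip: D_def)
    hence r1: "t * s * D = 1" using scal1 nz by blast
    have "cross3 (s *\<^sub>R w1) (a *\<^sub>R w2) = v2" using e(2) unfolding s a .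
    hence "(- (s * a * D)) *\<^sub>R v2 = v2"
      by (simp add: w1_def w2_def cross_mult_left cross_mult_right L1 t1 mult_ac)
    hence r2: "s * a * D = -1" using scal1 nz by (metis minus_equation_iff)
    have "cross3 (b *\<^sub>R w3) (t *\<^sub>R w0) = v0" using e(4) unfolding b t .
    hence "(- (b * t * D)) *\<^sub>R v0 = v0"
      by (simp add: w3_def w0_def cross_mult_left cross_mult_right L1 t3 mult_ac)
    hence r4: "b * t * D = -1" using scal1 nz by (metis minus_equation_iff)
    have tn: "t \<noteq> 0" using r1 by auto
    have sn: "s \<noteq> 0" using r1 by auto
    have "s * D * (a + t) = 0" using r1 r2 by (simp add: algebra_simps)
    hence aa: "a = - t" using sn D by (simp add: add_eq_0_iff)
    have "t * D * (b + s) = 0" using r1 r4 by (simp add: algebra_simps)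
    hence bb: "b = - s" using tn D by (simp add: add_eq_0_iff)
    have W: "w0 + w2 = w1 + w3" using wsum[OF sum0] by (simp add: w0_def w1_def w2_def w3_def)
    have "u 1 - u 3 = (s / t) *\<^sub>R (u 0 - u 2)"
    proof -
      have "u 1 - u 3 = s *\<^sub>R (w1 + w3)" unfolding s b bb by (simp add: scaleR_add_right)
      also have "\<dots> = s *\<^sub>R (w0 + w2)" by (simp add: W)
      also have "\<dots> = (s / t) *\<^sub>R (t *\<^sub>R (w0 + w2))" using tn by simp
      also have "\<dots> = (s / t) *\<^sub>R (u 0 - u 2)" unfolding t a aa by (simp add: scaleR_add_right)
      finally show ?thesis .
    qed
    hence "(Z + u 1) - (Z + u 3) = (s / t) *\<^sub>R ((Z + u 0) - (Z + u 2))" by simp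
    from quad[of "\<lambda>i. Z + u i", OF this] oa show ?thesis by simp
  qed
  show ?thesis using reg rest by (simp add: Let_def)
qed

end
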